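(* Let $k\ge2$, let $\mathcal{F}\subset 2^{[n]}$ be weakly $k$-cross-free, and let $\mathcal{C}_1,\dots,\mathcal{C}_k$ be nonempty chains with $\mathcal{C}_l\subset\mathcal{F}_{j_l}$ for integers $j_1<\dots<j_k$. For each $l$ fix a set $Y(\mathcal{C}_l)$ as described in the context. Then there do not exist $k$ distinct elements $y_1,\dots,y_k\in[n]$ such that $(\mathcal{C}_1,\dots,\mathcal{C}_k)$ is good for each of $y_1,\dots,y_k$.
   Context: Sets $A,B$ are weakly crossing if $A\setminus B$, $B\setminus A$, $A\cap B$ are all non-empty; a family is weakly $k$-cross-free if it contains no $k$ pairwise weakly crossing sets. $\mathcal{F}_i=\{X\in\mathcal{F}:2^i<|X|\le 2^{i+1}\}$. A chain is written $\mathcal{C}(1)\subsetneq\dots\subsetneq\mathcal{C}(l)$. $Y(\mathcal{C})$ is a set obtained by choosing one element of $\mathcal{C}(1)$ and one element of each difference $\mathcal{C}(j+1)\setminus\mathcal{C}(j)$, $j=1,\dots,l-1$. The $k$-tuple $(\mathcal{C}_1,\dots,\mathcal{C}_k)$ is good for $y$ if (i) $y\in Y(\mathcal{C}_l)$ for every $l\in[k]$ and (ii) letting $C_l$ be the smallest set in $\mathcal{C}_l$ containing $y$, we have $C_1\subset C_2\subset\dots\subset C_k$. *)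

theory Defs
  imports Complex_Main
begin

definition weakly_crossing :: "'a set \<Rightarrow> 'a set \<Rightarrow> bool" where
  "weakly_crossing A B \<longleftrightarrow> A - B \<noteq> {} \<and> B - A \<noteq> {} \<and> A \<inter> B \<noteq> {}"

definition weakly_k_cross_free :: "nat \<Rightarrow> 'a set set \<Rightarrow> bool" where
  "weakly_k_cross_free k F \<longleftrightarrow>
     \<not> (\<exists>S. S \<subseteq> F \<and> card S = k \<and> (\<forall>A\<in>S. \<forall>B\<in>S. A \<noteq> B \<longrightarrow> weakly_crossing A B))"

definition level :: "'a set set \<Rightarrow> int \<Rightarrow> 'a set set" where
  "level F i = {X \<in> F. (2::real) powi i < real (card X) \<and> real (card X) \<le> (2::real) powi (i + 1)}"

text \<open>A chain C(1) strictly contained in ... C(l), represented as a list (0-indexed).\<close>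
definition is_chain :: "'a set list \<Rightarrow> bool" where
  "is_chain C \<longleftrightarrow> (\<forall>i. Suc i < length C \<longrightarrow> C ! i \<subset> C ! Suc i)"

definition is_Y :: "'a set list \<Rightarrow> 'a set \<Rightarrow> bool" where
  "is_Y C Y \<longleftrightarrow> (\<exists>f. f 0 \<in> C ! 0 \<and>
      (\<forall>i. Suc i < length C \<longrightarrow> f (Suc i) \<in> C ! Suc i - C ! i) \<and>
      Y = f ` {..<length C})"

definition smallest_containing :: "'a set list \<Rightarrow> 'a \<Rightarrow> 'a set" where
  "smallest_containing C y = C ! (LEAST i. i < length C \<and> y \<in> C ! i)"

definition good :: "nat \<Rightarrow> (nat \<Rightarrow> 'a set list) \<Rightarrow> (nat \<Rightarrow> 'a set) \<Rightarrow> 'a \<Rightarrow> bool" where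
  "good k Cs Ys y \<longleftrightarrow> (\<forall>l<k. y \<in> Ys l) \<and>
     (\<forall>l. Suc l < k \<longrightarrow> smallest_containing (Cs l) y \<subseteq> smallest_containing (Cs (Suc l)) y)"

end

theory Submission imports Defs begin

lemma chain_mono:
  assumes "is_chain C" "i \<le> j" "j < length C"
  shows "C!i \<subseteq> C!j"
  using assms(2,3)
proof (induction j)
  case 0 then show ?case by simp
next
  case (Suc j)
  show ?case
  proof (cases "i = Suc j")
    case True then show ?thesis by simp
  next
    case False
    then have "i \<le> j" using Suc.prems by simp
    then have "C!i \<subseteq> C!j" using Suc by simp
    moreover have "C!j \<subset> C!Suc j" using assms(1) Suc.prems unfolding is_chain_def by simp
    ultimately show ?thesis by blast
  qed
qed

lemma chain_comparable:
  assumes "is_chain C" "A \<in> set C" "B \<in> set C"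
  shows "A \<subseteq> B \<or> B \<subseteq> A"
proof -
  obtain a b where "a < length C" "b < length C" "A = C!a" "B = C!b"
    using assms by (auto simp: in_set_conv_nth)
  then show ?thesis using chain_mono[OF assms(1)] nat_le_linear by metis
qed

lemma Y_index:
  assumes "is_chain C" "f 0 \<in> C!0" "\<forall>i. Suc i < length C \<longrightarrow> f (Suc i) \<in> C!Suc i - C!i"
    "i' < length C" "i < length C"
  shows "f i' \<in> C!i \<longleftrightarrow> i' \<le> i"
proof
  assume h: "f i' \<in> C!i"
  show "i' \<le> i"
  proof (rule ccontr)
    assume "\<not> i' \<le> i"
    then obtain p where p: "i' = Suc p" "i \<le> p" by (cases i') auto
    then have "f i' \<notin> C!p" using assms(3,4) by auto
    moreover have "C!i \<subseteq> C!p" using chain_mono[OF assms(1) p(2)] p assms(4) by simp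
    ultimately show False using h by blast
  qed
next
  assume h: "i' \<le> i"
  have "f i' \<in> C!i'" using assms by (cases i') auto
  then show "f i' \<in> C!i" using chain_mono[OF assms(1) h assms(5)] by blast
qed

lemma ivt_nat:
  fixes g :: "nat \<Rightarrow> nat"
  assumes "g 0 \<le> 1" "\<And>i. Suc i \<le> N \<Longrightarrow> g (Suc i) \<le> g i + 1" "1 \<le> r" "r \<le> g N"
  shows "\<exists>i\<le>N. g i = r"
  using assms(2,4)
proof (induction N)
  case 0 then show ?case using assms(1,3) by (intro exI[of _ 0]) auto
next
  case (Suc N)
  show ?case
  proof (cases "r \<le> g N")
    case True then show ?thesis using Suc by (metis le_SucI)
  next
    case False
    then have "r = g (Suc N)" using Suc.prems by fastforce
    then show ?thesis by blast
  qed
qed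

lemma exists_layer:
  assumes "is_chain C" "C \<noteq> []" "is_Y C Y" "T \<subseteq> Y" "1 \<le> r" "r \<le> card T"
  shows "\<exists>A\<in>set C. card (T \<inter> A) = r"
proof -
  obtain f where f0: "f 0 \<in> C!0" and fs: "\<forall>i. Suc i < length C \<longrightarrow> f (Suc i) \<in> C!Suc i - C!i"
    and Y: "Y = f ` {..<length C}" using assms(3) unfolding is_Y_def by blast
  note YI = Y_index[OF assms(1) f0 fs]
  have fin: "finite T" using assms(4) Y finite_subset by blast
  define g where "g i = card (T \<inter> C!i)" for i
  define N where "N = length C - 1"
  have N: "N < length C" using assms(2) N_def by simp
  have "T \<inter> C!0 \<subseteq> {f 0}"
  proof
    fix x assume "x \<in> T \<inter> C!0"
    then obtain i' where "i' < length C" "x = f i'" "f i' \<in> C!0" using assms(4) Y by auto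
    then show "x \<in> {f 0}" using YI[of i' 0] N assms(2) by auto
  qed
  then have g0: "g 0 \<le> 1" unfolding g_def using card_mono[of "{f 0}" "T \<inter> C!0"] by simp
  have gs: "g (Suc i) \<le> g i + 1" if "Suc i \<le> N" for i
  proof -
    have "T \<inter> C!Suc i \<subseteq> insert (f (Suc i)) (T \<inter> C!i)"
    proof
      fix x assume "x \<in> T \<inter> C!Suc i"
      then obtain i' where i': "i' < length C" "x = f i'" "f i' \<in> C!Suc i" "x \<in> T" using assms(4) Y by auto
      then have "i' \<le> Suc i" using YI[of i' "Suc i"] that N by auto
      then show "x \<in> insert (f (Suc i)) (T \<inter> C!i)"
      proof (cases "i' = Suc i")
        case False
        then have "i' \<le> i" using \<open>i' \<le> Suc i\<close> by simp
        then show ?thesis using YI[of i' i] i' that N by auto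
      qed (use i' in auto)
    qed
    then have "card (T \<inter> C!Suc i) \<le> card (insert (f (Suc i)) (T \<inter> C!i))"
      by (intro card_mono) (use fin in auto)
    also have "\<dots> \<le> card (T \<inter> C!i) + 1" using fin by (simp add: card_insert_le_m1 card_insert_if)
    finally show ?thesis unfolding g_def .
  qed
  have "T \<subseteq> C!N"
  proof
    fix x assume "x \<in> T"
    then obtain i' where "i' < length C" "x = f i'" using assms(4) Y by auto
    then show "x \<in> C!N" using YI[of i' N] N N_def by auto
  qed
  then have "g N = card T" unfolding g_def by (simp add: Int_absorb2)
  then obtain i where "i \<le> N" "g i = r" using ivt_nat[of g N r] g0 gs assms(5,6) by auto
  then show ?thesis unfolding g_def using N by (intro bexI[of _ "C!i"]) auto
qed

lemma smallest:
  assumes "is_chain C" "i < length C" "y \<in> C!i"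
  shows "smallest_containing C y \<in> set C" "y \<in> smallest_containing C y"
    "\<And>A. A \<in> set C \<Longrightarrow> y \<in> A \<Longrightarrow> smallest_containing C y \<subseteq> A"
proof -
  define m where "m = (LEAST i. i < length C \<and> y \<in> C ! i)"
  have m: "m < length C \<and> y \<in> C!m" unfolding m_def by (rule LeastI[of _ i]) (use assms in auto)
  have ml: "m \<le> i'" if "i' < length C" "y \<in> C!i'" for i' unfolding m_def by (rule Least_le) (use that in auto)
  show "smallest_containing C y \<in> set C" "y \<in> smallest_containing C y"
    unfolding smallest_containing_def m_def[symmetric] using m by auto
  fix A assume "A \<in> set C" "y \<in> A"
  then obtain a where "a < length C" "A = C!a" by (auto simp: in_set_conv_nth)
  then show "smallest_containing C y \<subseteq> A"
    unfolding smallest_containing_def m_def[symmetric] using ml chain_mono[OF assms(1)] \<open>y \<in> A\<close> by auto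
qed

lemma good_chain:
  assumes "good k Cs Ys y" "l \<le> l'" "l' < k"
  shows "smallest_containing (Cs l) y \<subseteq> smallest_containing (Cs l') y"
  using assms(2,3)
proof (induction l')
  case 0 then show ?case by simp
next
  case (Suc l')
  show ?case
  proof (cases "l = Suc l'")
    case False
    then have "smallest_containing (Cs l) y \<subseteq> smallest_containing (Cs l') y" using Suc by simp
    also have "\<dots> \<subseteq> smallest_containing (Cs (Suc l')) y" using assms(1) Suc.prems unfolding good_def by simp
    finally show ?thesis .
  qed simp
qed

lemma j_mono:
  fixes j :: "nat \<Rightarrow> int"
  assumes "\<And>l. Suc l < k \<Longrightarrow> j l < j (Suc l)" "l < l'" "l' < k"
  shows "j l < j l'"
  using assms(2,3)
proof (induction l')
  case 0 then show ?case by simp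
next
  case (Suc l')
  show ?case
  proof (cases "l = l'")
    case True then show ?thesis using assms(1) Suc.prems by simp
  next
    case False
    then have "j l < j l'" using Suc by simp
    then show ?thesis using assms(1) Suc.prems by force
  qed
qed

lemma level_card:
  assumes "X \<in> level F a" "X' \<in> level F b" "a < b"
  shows "card X < card X'"
proof -
  have "real (card X) \<le> (2::real) powi (a + 1)" using assms(1) unfolding level_def by simp
  also have "\<dots> \<le> 2 powi b" by (rule power_int_increasing) (use assms(3) in auto)
  also have "\<dots> < real (card X')" using assms(2) unfolding level_def by simp
  finally show ?thesis by simp
qed

theorem claim5:
  fixes n k :: nat and F :: "nat set set" and Cs :: "nat \<Rightarrow> nat set list"
    and j :: "nat \<Rightarrow> int" and Ys :: "nat \<Rightarrow> nat set"
  assumes "k \<ge> 2"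
    and "F \<subseteq> Pow {1..n}"
    and "weakly_k_cross_free k F"
    and "\<And>l. l < k \<Longrightarrow> Cs l \<noteq> [] \<and> is_chain (Cs l) \<and> set (Cs l) \<subseteq> level F (j l)"
    and "\<And>l. Suc l < k \<Longrightarrow> j l < j (Suc l)"
    and "\<And>l. l < k \<Longrightarrow> is_Y (Cs l) (Ys l)"
  shows "\<not> (\<exists>ys :: nat \<Rightarrow> nat. inj_on ys {..<k} \<and> ys ` {..<k} \<subseteq> {1..n} \<and>
              (\<forall>m<k. good k Cs Ys (ys m)))"
proof
  assume "\<exists>ys :: nat \<Rightarrow> nat. inj_on ys {..<k} \<and> ys ` {..<k} \<subseteq> {1..n} \<and>
              (\<forall>m<k. good k Cs Ys (ys m))"
  then obtain ys where inj: "inj_on ys {..<k}" and gd: "\<forall>m<k. good k Cs Ys (ys m)" by blast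
  define T where "T = ys ` {..<k}"
  have cT: "card T = k" unfolding T_def using inj by (simp add: card_image)
  have finT: "finite T" unfolding T_def by simp
  have gT: "good k Cs Ys y" if "y \<in> T" for y using gd that unfolding T_def by auto
  have TY: "T \<subseteq> Ys l" if "l < k" for l using gT that unfolding good_def by auto
  have ch: "is_chain (Cs l)" "Cs l \<noteq> []" "set (Cs l) \<subseteq> level F (j l)" if "l < k" for l
    using assms(4)[OF that] by auto
  have finF: "finite X" if "X \<in> F" for X using assms(2) that finite_subset by blast
  have lvF: "level F i \<subseteq> F" for i unfolding level_def by auto
  have exA: "\<exists>A. A \<in> set (Cs l) \<and> card (T \<inter> A) = k - l" if "l < k" for l
    using exists_layer[OF ch(1)[OF that] ch(2)[OF that] assms(6)[OF that] TY[OF that], of "k - l"] that cT by force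
  define A where "A l = (SOME A. A \<in> set (Cs l) \<and> card (T \<inter> A) = k - l)" for l
  have A: "A l \<in> set (Cs l)" "card (T \<inter> A l) = k - l" if "l < k" for l
    using someI_ex[OF exA[OF that]] unfolding A_def by auto
  have AF: "A l \<in> F" if "l < k" for l using A(1)[OF that] ch(3)[OF that] lvF by blast
  have Acard: "card (A l) < card (A l')" if "l < l'" "l' < k" for l l'
  proof -
    have "j l < j l'" using j_mono[of k j, OF assms(5)] that by blast
    moreover have "A l \<in> level F (j l)" "A l' \<in> level F (j l')" using A(1)[of l] A(1)[of l'] ch(3)[of l] ch(3)[of l'] that by auto
    ultimately show ?thesis using level_card by blast
  qed
  have cross: "weakly_crossing (A l) (A l')" if "l < l'" "l' < k" for l l'
  proof -
    have fl: "finite (A l')" "finite (A l)" using AF finF that by auto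
    have 1: "A l' - A l \<noteq> {}"
    proof
      assume "A l' - A l = {}"
      then have "card (A l') \<le> card (A l)" using fl by (intro card_mono) auto
      then show False using Acard[OF that] by simp
    qed
    have 2: "A l - A l' \<noteq> {}"
    proof
      assume "A l - A l' = {}"
      then have "card (T \<inter> A l) \<le> card (T \<inter> A l')" using finT by (intro card_mono) auto
      then show False using A(2) that by simp
    qed
    have "card (T \<inter> A l') \<ge> 1" using A(2)[of l'] that by simp
    then obtain y where y: "y \<in> T" "y \<in> A l'" by (metis card.empty disjoint_iff not_one_le_zero)
    have lk: "l < k" using that by simp
    note ll = that
    have yl: "y \<in> Ys l" using TY[of l] ll y by auto
    obtain fY where fY: "Ys l = fY ` {..<length (Cs l)}" "fY 0 \<in> Cs l ! 0"
        "\<forall>i. Suc i < length (Cs l) \<longrightarrow> fY (Suc i) \<in> Cs l ! Suc i - Cs l ! i"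
      using assms(6)[OF lk] unfolding is_Y_def by blast
    obtain i where i: "i < length (Cs l)" "y \<in> Cs l ! i"
    proof -
      obtain i where i: "i < length (Cs l)" "y = fY i" using yl fY(1) by auto
      have "fY i \<in> Cs l ! i" using fY(2,3) i(1) by (cases i) auto
      then show ?thesis using that i by blast
    qed
    note sm = smallest[OF ch(1) i(1) i(2)]
    obtain i' where i': "i' < length (Cs l')" "A l' = Cs l' ! i'" using A(1)[of l'] ll by (auto simp: in_set_conv_nth)
    note sm' = smallest[OF ch(1) i'(1), of y]
    have "smallest_containing (Cs l) y \<subseteq> smallest_containing (Cs l') y"
      using good_chain[OF gT[OF y(1)]] ll by simp
    also have "\<dots> \<subseteq> A l'" using sm'(3)[of "A l'"] A(1)[of l'] i' y ll by auto
    finally have s: "smallest_containing (Cs l) y \<subseteq> A l'" .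
    have 3: "A l \<inter> A l' \<noteq> {}"
    proof (cases "smallest_containing (Cs l) y \<subseteq> A l")
      case True then show ?thesis using s sm(2) ll by auto
    next
      case False
      then have "A l \<subseteq> smallest_containing (Cs l) y"
        using chain_comparable[OF ch(1) sm(1) A(1)] ll by auto
      moreover have "A l \<noteq> {}" using A(2)[of l] ll by auto
      ultimately show ?thesis using s by blast
    qed
    show ?thesis using 1 2 3 unfolding weakly_crossing_def by blast
  qed
  have injA: "inj_on A {..<k}"
  proof (rule inj_onI)
    fix a b assume "a \<in> {..<k}" "b \<in> {..<k}" "A a = A b"
    then show "a = b" using Acard by (metis lessThan_iff less_irrefl nat_neq_iff)
  qed
  have "\<exists>S. S \<subseteq> F \<and> card S = k \<and> (\<forall>X\<in>S. \<forall>Z\<in>S. X \<noteq> Z \<longrightarrow> weakly_crossing X Z)"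
  proof (intro exI conjI ballI impI)
    show "A ` {..<k} \<subseteq> F" using AF by auto
    show "card (A ` {..<k}) = k" using injA by (simp add: card_image)
    fix X Z assume "X \<in> A ` {..<k}" "Z \<in> A ` {..<k}" "X \<noteq> Z"
    then obtain a b where ab: "a < k" "b < k" "X = A a" "Z = A b" "a \<noteq> b" by auto
    show "weakly_crossing X Z"
    proof (cases "a < b")
      case True then show ?thesis using cross ab by simp
    next
      case False
      then have "weakly_crossing Z X" using cross ab by simp
      then show ?thesis unfolding weakly_crossing_def by blast
    qed
  qed
  then show False using assms(3) unfolding weakly_k_cross_free_def by blast
qed

end
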